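(* For every countable two-sorted ultrametric space $X$ there is a topological group embedding $\mathrm{Aut}(X)\to\mathrm{Aut}(\mathbb U)$.
   Context: A two-sorted ultrametric space is $(X,d_X,D_X)$ with $D_X$ a linear order with least element $0$, $d_X\colon X\times X\to D_X$ symmetric, $d_X(x,y)=0\iff x=y$, $d_X(x,z)\le\max\{d_X(x,y),d_X(y,z)\}$; countable if both $X$ and $D_X$ are countable. $\mathrm{Aut}(X)$ is the group of dc-automorphisms (bijections $f$ of $X$ with an order automorphism $D_f$ of $D_X$ with $d(f(x),f(y))=D_f(d(x,y))$) with the topology of pointwise convergence on both sorts (both viewed as discrete). $\mathbb U$ is the countable rational Urysohn ultrametric space viewed as a two-sorted space with distance set $\mathbb Q_{\ge0}$ (equivalently the Fraïssé limit of finite two-sorted ultrametric spaces with dc-embeddings). *)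

theory Defs
  imports "HOL-Analysis.Analysis" "HOL-Algebra.Group"
begin

definition tsum_space :: "'a set \<Rightarrow> 'd::linorder set \<Rightarrow> 'd \<Rightarrow> ('a \<Rightarrow> 'a \<Rightarrow> 'd) \<Rightarrow> bool" where
  "tsum_space X D z d \<longleftrightarrow>
     z \<in> D \<and> (\<forall>e\<in>D. z \<le> e) \<and>
     (\<forall>x\<in>X. \<forall>y\<in>X. d x y \<in> D \<and> d x y = d y x \<and> (d x y = z \<longleftrightarrow> x = y)) \<and>
     (\<forall>x\<in>X. \<forall>y\<in>X. \<forall>w\<in>X. d x w \<le> max (d x y) (d y w))"

definition countable_tsum_space :: "'a set \<Rightarrow> 'd::linorder set \<Rightarrow> 'd \<Rightarrow> ('a \<Rightarrow> 'a \<Rightarrow> 'd) \<Rightarrow> bool" where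
  "countable_tsum_space X D z d \<longleftrightarrow> tsum_space X D z d \<and> countable X \<and> countable D"

text \<open>dc-automorphisms, represented as pairs (f, D_f) of maps that are the identity
  outside X resp. D (so that each automorphism has a unique representative).\<close>
definition dc_aut :: "'a set \<Rightarrow> 'd::linorder set \<Rightarrow> ('a \<Rightarrow> 'a \<Rightarrow> 'd) \<Rightarrow> (('a \<Rightarrow> 'a) \<times> ('d \<Rightarrow> 'd)) set" where
  "dc_aut X D d = {(f, g).
     bij_betw f X X \<and> (\<forall>x. x \<notin> X \<longrightarrow> f x = x) \<and>
     bij_betw g D D \<and> strict_mono_on D g \<and> (\<forall>e. e \<notin> D \<longrightarrow> g e = e) \<and>
     (\<forall>x\<in>X. \<forall>y\<in>X. d (f x) (f y) = g (d x y))}"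

definition aut_group :: "'a set \<Rightarrow> 'd::linorder set \<Rightarrow> ('a \<Rightarrow> 'a \<Rightarrow> 'd) \<Rightarrow> (('a \<Rightarrow> 'a) \<times> ('d \<Rightarrow> 'd)) monoid" where
  "aut_group X D d = \<lparr> carrier = dc_aut X D d,
     mult = (\<lambda>h k. (fst h \<circ> fst k, snd h \<circ> snd k)),
     one = (id, id) \<rparr>"

text \<open>Topology of pointwise convergence on both sorts (both discrete): generated by the
  basic sets of automorphisms agreeing with a given one on finitely many points of X and D.\<close>
definition aut_top :: "'a set \<Rightarrow> 'd::linorder set \<Rightarrow> ('a \<Rightarrow> 'a \<Rightarrow> 'd) \<Rightarrow> (('a \<Rightarrow> 'a) \<times> ('d \<Rightarrow> 'd)) topology" where
  "aut_top X D d = subtopology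
     (topology_generated_by
       {{h \<in> dc_aut X D d. (\<forall>x\<in>F. fst h x = fst h0 x) \<and> (\<forall>e\<in>E. snd h e = snd h0 e)} | h0 F E.
          h0 \<in> dc_aut X D d \<and> finite F \<and> F \<subseteq> X \<and> finite E \<and> E \<subseteq> D})
     (dc_aut X D d)"

text \<open>The rational Urysohn ultrametric space: a countable ultrametric space with distances
  in the nonnegative rationals satisfying the one-point extension property for all finite
  ultrametric one-point extensions with rational distances (characterises it up to isometry).\<close>
definition rat_urysohn_ultrametric :: "'u set \<Rightarrow> ('u \<Rightarrow> 'u \<Rightarrow> rat) \<Rightarrow> bool" where
  "rat_urysohn_ultrametric U dU \<longleftrightarrow>
     countable_tsum_space U {q. 0 \<le> q} 0 dU \<and>
     (\<forall>A (r :: 'u \<Rightarrow> rat). finite A \<and> A \<subseteq> U \<and> (\<forall>a\<in>A. 0 < r a) \<and>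
        (\<forall>a\<in>A. \<forall>b\<in>A. dU a b \<le> max (r a) (r b) \<and> r a \<le> max (dU a b) (r b))
        \<longrightarrow> (\<exists>u\<in>U. \<forall>a\<in>A. dU u a = r a))"

end

theory Submission
  imports Defs
begin

lemma dc_autD:
  assumes "(f, g) \<in> dc_aut X D d"
  shows "bij_betw f X X" "\<And>x. x \<notin> X \<Longrightarrow> f x = x" "bij_betw g D D" "strict_mono_on D g"
    "\<And>e. e \<notin> D \<Longrightarrow> g e = e" "\<And>x y. x \<in> X \<Longrightarrow> y \<in> X \<Longrightarrow> d (f x) (f y) = g (d x y)"
  using assms unfolding dc_aut_def by auto

lemma bij_ext_id:
  assumes "bij_betw f X X" "\<And>x. x \<notin> X \<Longrightarrow> f x = x"
  shows "bij f"
proof -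
  have "inj f"
  proof (rule injI)
    fix x y assume "f x = f y"
    then show "x = y" using assms unfolding bij_betw_def inj_on_def
      by (metis image_eqI)
  qed
  moreover have "surj f"
  proof -
    { fix y have "y \<in> range f"
      proof (cases "y \<in> X")
        case True then show ?thesis using assms(1) unfolding bij_betw_def by auto
      next
        case False then show ?thesis using assms(2) by (metis rangeI)
      qed }
    then show ?thesis by auto
  qed
  ultimately show ?thesis by (simp add: bij_def)
qed

lemma dc_aut_bij:
  assumes "(f, g) \<in> dc_aut X D d"
  shows "bij f" "bij g"
  using bij_ext_id dc_autD[OF assms] by metis+

lemma dc_aut_comp:
  assumes "(f, g) \<in> dc_aut X D d" "(f', g') \<in> dc_aut X D d"
  shows "(f \<circ> f', g \<circ> g') \<in> dc_aut X D d"
proof -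
  note A = dc_autD[OF assms(1)] and B = dc_autD[OF assms(2)]
  have "strict_mono_on D (g \<circ> g')"
    unfolding strict_mono_on_def
  proof (intro allI impI)
    fix a b assume "a \<in> D \<and> b \<in> D \<and> a < b"
    then have "g' a < g' b" "g' a \<in> D" "g' b \<in> D" using B(3,4) unfolding strict_mono_on_def bij_betw_def
      by auto
    then show "(g \<circ> g') a < (g \<circ> g') b" using A(4) unfolding strict_mono_on_def by auto
  qed
  moreover have "f' x \<in> X" if "x \<in> X" for x using B(1) that unfolding bij_betw_def by auto
  ultimately show ?thesis unfolding dc_aut_def using A B
    by (auto intro: bij_betw_trans)
qed

lemma dc_aut_id: "(id, id) \<in> dc_aut X D d"
  unfolding dc_aut_def by (auto simp: strict_mono_on_def)

lemma dc_aut_inv: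
  assumes "(f, g) \<in> dc_aut X D d"
  shows "(inv_into UNIV f, inv_into UNIV g) \<in> dc_aut X D d"
proof -
  note A = dc_autD[OF assms] and Bj = dc_aut_bij[OF assms]
  have fX: "f x \<in> X" if "x \<in> X" for x using A(1) that unfolding bij_betw_def by auto
  have gD: "g x \<in> D" if "x \<in> D" for x using A(3) that unfolding bij_betw_def by auto
  have if1: "inv_into UNIV f (f x) = x" for x using Bj(1) by (simp add: bij_is_inj)
  have if2: "f (inv_into UNIV f x) = x" for x using Bj(1) by (simp add: bij_is_surj surj_f_inv_f)
  have ig1: "inv_into UNIV g (g x) = x" for x using Bj(2) by (simp add: bij_is_inj)
  have ig2: "g (inv_into UNIV g x) = x" for x using Bj(2) by (simp add: bij_is_surj surj_f_inv_f)
  have ifX: "inv_into UNIV f x \<in> X" if "x \<in> X" for x using A(2) if2 that by metis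
  have igD: "inv_into UNIV g x \<in> D" if "x \<in> D" for x using A(5) ig2 that by metis
  have "bij_betw (inv_into UNIV f) X X"
    by (rule bij_betw_byWitness[where f'=f]) (use fX ifX if1 if2 in auto)
  moreover have "bij_betw (inv_into UNIV g) D D"
    by (rule bij_betw_byWitness[where f'=g]) (use gD igD ig1 ig2 in auto)
  moreover have "inv_into UNIV f x = x" if "x \<notin> X" for x using A(2)[OF that] if1 by metis
  moreover have "inv_into UNIV g x = x" if "x \<notin> D" for x using A(5)[OF that] ig1 by metis
  moreover have "strict_mono_on D (inv_into UNIV g)"
    unfolding strict_mono_on_def
  proof (intro allI impI)
    fix a b assume ab: "a \<in> D \<and> b \<in> D \<and> a < b"
    show "inv_into UNIV g a < inv_into UNIV g b"
    proof (rule ccontr)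
      assume "\<not> inv_into UNIV g a < inv_into UNIV g b"
      then have "inv_into UNIV g b \<le> inv_into UNIV g a" by simp
      then have "g (inv_into UNIV g b) \<le> g (inv_into UNIV g a)" using A(4) igD ab
        by (metis order.order_iff_strict strict_mono_on_def)
      then show False using ab ig2 by (metis leD)
    qed
  qed
  moreover have "d (inv_into UNIV f x) (inv_into UNIV f y) = inv_into UNIV g (d x y)" if "x \<in> X" "y \<in> X" for x y
    using A(6)[OF ifX[OF that(1)] ifX[OF that(2)]] if2 ig1 by metis
  ultimately show ?thesis unfolding dc_aut_def by auto
qed

lemma group_aut: "group (aut_group X D d)"
proof (rule groupI)
  fix x y assume "x \<in> carrier (aut_group X D d)" "y \<in> carrier (aut_group X D d)"
  then show "x \<otimes>\<^bsub>aut_group X D d\<^esub> y \<in> carrier (aut_group X D d)"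
    unfolding aut_group_def using dc_aut_comp by (cases x, cases y) fastforce
next
  show "\<one>\<^bsub>aut_group X D d\<^esub> \<in> carrier (aut_group X D d)"
    unfolding aut_group_def using dc_aut_id by simp
next
  fix x y z show "x \<otimes>\<^bsub>aut_group X D d\<^esub> y \<otimes>\<^bsub>aut_group X D d\<^esub> z = x \<otimes>\<^bsub>aut_group X D d\<^esub> (y \<otimes>\<^bsub>aut_group X D d\<^esub> z)"
    unfolding aut_group_def by (simp add: comp_assoc)
next
  fix x show "\<one>\<^bsub>aut_group X D d\<^esub> \<otimes>\<^bsub>aut_group X D d\<^esub> x = x"
    unfolding aut_group_def by simp
next
  fix x assume "x \<in> carrier (aut_group X D d)"
  then obtain f g where x: "x = (f, g)" "(f, g) \<in> dc_aut X D d" unfolding aut_group_def by (cases x) auto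
  have "inv_into UNIV f \<circ> f = id" "inv_into UNIV g \<circ> g = id" using dc_aut_bij[OF x(2)]
    by (simp_all add: bij_is_inj)
  then show "\<exists>y\<in>carrier (aut_group X D d). y \<otimes>\<^bsub>aut_group X D d\<^esub> x = \<one>\<^bsub>aut_group X D d\<^esub>"
    using dc_aut_inv[OF x(2)] x unfolding aut_group_def by (intro bexI[of _ "(inv_into UNIV f, inv_into UNIV g)"]) auto
qed

definition um :: "'x set \<Rightarrow> ('x \<Rightarrow> 'x \<Rightarrow> rat) \<Rightarrow> bool" where
  "um S dS \<longleftrightarrow> (\<forall>x\<in>S. \<forall>y\<in>S. 0 \<le> dS x y \<and> dS x y = dS y x \<and> (dS x y = 0 \<longleftrightarrow> x = y)) \<and>
     (\<forall>x\<in>S. \<forall>y\<in>S. \<forall>w\<in>S. dS x w \<le> max (dS x y) (dS y w))"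

definition extp :: "'x set \<Rightarrow> ('x \<Rightarrow> 'x \<Rightarrow> rat) \<Rightarrow> bool" where
  "extp S dS \<longleftrightarrow> (\<forall>A (r :: 'x \<Rightarrow> rat). finite A \<and> A \<subseteq> S \<and> (\<forall>a\<in>A. 0 < r a) \<and>
        (\<forall>a\<in>A. \<forall>b\<in>A. dS a b \<le> max (r a) (r b) \<and> r a \<le> max (dS a b) (r b))
        \<longrightarrow> (\<exists>u\<in>S. \<forall>a\<in>A. dS u a = r a))"

definition piso :: "'x set \<Rightarrow> 'y set \<Rightarrow> ('x \<Rightarrow> 'x \<Rightarrow> rat) \<Rightarrow> ('y \<Rightarrow> 'y \<Rightarrow> rat) \<Rightarrow> ('x \<times> 'y) set \<Rightarrow> bool" where
  "piso S T dS dT P \<longleftrightarrow> P \<subseteq> S \<times> T \<and> finite P \<and> (\<forall>a b a' b'. (a,b)\<in>P \<longrightarrow> (a',b')\<in>P \<longrightarrow> dT b b' = dS a a')"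

lemma umD:
  assumes "um S dS" "x \<in> S" "y \<in> S"
  shows "0 \<le> dS x y" "dS x y = dS y x" "(dS x y = 0) = (x = y)" "dS x x = 0"
    "\<And>w. w \<in> S \<Longrightarrow> dS x w \<le> max (dS x y) (dS y w)"
  using assms unfolding um_def by auto

lemma piso_conv: "piso S T dS dT P \<Longrightarrow> piso T S dT dS (P\<inverse>)"
  unfolding piso_def by auto

lemma piso_forth:
  assumes umS: "um S dS" and umT: "um T dT" and eT: "extp T dT" and P: "piso S T dS dT P" and s: "s \<in> S"
  shows "\<exists>t\<in>T. piso S T dS dT (insert (s,t) P)"
proof (cases "\<exists>t. (s,t) \<in> P")
  case True
  then obtain t where "(s,t) \<in> P" by auto
  then show ?thesis using P unfolding piso_def by (intro bexI[of _ t]) (auto simp: insert_absorb)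
next
  case False
  define pre where "pre b = (SOME a. (a,b) \<in> P)" for b
  have pre: "(pre b, b) \<in> P" if "b \<in> snd ` P" for b
    unfolding pre_def using that by (auto intro: someI)
  define r where "r b = dS s (pre b)" for b
  have PST: "P \<subseteq> S \<times> T" "finite P" and Pd: "\<And>a b a' b'. (a,b)\<in>P \<Longrightarrow> (a',b')\<in>P \<Longrightarrow> dT b b' = dS a a'"
    using P unfolding piso_def by auto
  note uS = umS[unfolded um_def] and uT = umT[unfolded um_def]
  have preS: "pre b \<in> S" if "b \<in> snd ` P" for b using pre[OF that] PST by auto
  have "\<exists>u\<in>T. \<forall>b\<in>snd ` P. dT u b = r b"
  proof (rule eT[unfolded extp_def, rule_format], intro conjI)
    show "finite (snd ` P)" using PST by auto
    show "snd ` P \<subseteq> T" using PST by auto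
    show "\<forall>a\<in>snd ` P. 0 < r a"
    proof
      fix b assume b: "b \<in> snd ` P"
      have "pre b \<noteq> s" using False pre[OF b] by metis
      moreover have "0 \<le> dS s (pre b)" "(dS s (pre b) = 0) = (s = pre b)" using umD(1,3)[OF umS s preS[OF b]] by auto
      ultimately show "0 < r b" unfolding r_def by auto
    qed
    show "\<forall>a\<in>snd ` P. \<forall>b\<in>snd ` P. dT a b \<le> max (r a) (r b) \<and> r a \<le> max (dT a b) (r b)"
    proof (intro ballI conjI)
      fix b b' assume b: "b \<in> snd ` P" and b': "b' \<in> snd ` P"
      have e: "dT b b' = dS (pre b) (pre b')" using Pd[OF pre[OF b] pre[OF b']] .
      have u1: "dS (pre b) (pre b') \<le> max (dS (pre b) s) (dS s (pre b'))"
        using umD(5)[OF umS preS[OF b] s preS[OF b']] .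
      have u2: "dS s (pre b) \<le> max (dS s (pre b')) (dS (pre b') (pre b))"
        using umD(5)[OF umS s preS[OF b'] preS[OF b]] .
      have s1: "dS (pre b) s = dS s (pre b)" "dS (pre b') (pre b) = dS (pre b) (pre b')"
        using umD(2)[OF umS preS[OF b] s] umD(2)[OF umS preS[OF b'] preS[OF b]] by auto
      show "dT b b' \<le> max (r b) (r b')" unfolding e r_def using u1 s1 by simp
      show "r b \<le> max (dT b b') (r b')" unfolding e r_def using u2 s1 by (simp add: max.commute)
    qed
  qed
  then obtain t where t: "t \<in> T" "\<And>b. b \<in> snd ` P \<Longrightarrow> dT t b = r b" by auto
  have key: "dT t b = dS s a" if "(a,b) \<in> P" for a b
  proof -
    have b: "b \<in> snd ` P" using that by force
    have "dT b b = dS (pre b) a" using Pd[OF pre[OF b] that] .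
    moreover have aS: "a \<in> S" "b \<in> T" using PST that by auto
    moreover have "dT b b = 0" using umD(4)[OF umT aS(2) aS(2)] .
    ultimately have "dS (pre b) a = 0" by simp
    then have "pre b = a" using umD(3)[OF umS preS[OF b] aS(1)] by simp
    then show ?thesis using t(2)[OF b] unfolding r_def by simp
  qed
  have "piso S T dS dT (insert (s,t) P)"
    unfolding piso_def
  proof (intro conjI)
    show "insert (s, t) P \<subseteq> S \<times> T" using PST s t by auto
    show "finite (insert (s, t) P)" using PST by auto
    show "\<forall>a b a' b'. (a, b)\<in>insert (s, t) P \<longrightarrow> (a', b')\<in>insert (s, t) P \<longrightarrow> dT b b' = dS a a'"
    proof (intro allI impI)
      fix a b a' b' assume ab: "(a,b) \<in> insert (s,t) P" and ab': "(a',b') \<in> insert (s,t) P"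
      have aS: "a \<in> S" "b \<in> T" using ab PST s t by auto
      have aS': "a' \<in> S" "b' \<in> T" using ab' PST s t by auto
      show "dT b b' = dS a a'"
      proof (cases "(a,b) = (s,t)")
        case True
        show ?thesis
        proof (cases "(a',b') = (s,t)")
          case True2: True
          then show ?thesis using True umD(4)[OF umS s s] umD(4)[OF umT t(1) t(1)] by auto
        next
          case False2: False
          then have "(a',b') \<in> P" using ab' by auto
          then show ?thesis using key True by auto
        qed
      next
        case False
        then have abP: "(a,b) \<in> P" using ab by auto
        show ?thesis
        proof (cases "(a',b') = (s,t)")
          case True2: True
          then show ?thesis using key[OF abP] umD(2)[OF umS aS(1) s] umD(2)[OF umT aS(2) t(1)] by auto
        next
          case False2: False
          then have "(a',b') \<in> P" using ab' by auto
          then show ?thesis using Pd abP by auto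
        qed
      qed
    qed
  qed
  then show ?thesis using t by auto
qed

lemma piso_back:
  assumes umS: "um S dS" and umT: "um T dT" and eS: "extp S dS" and P: "piso S T dS dT P" and t: "t \<in> T"
  shows "\<exists>s\<in>S. piso S T dS dT (insert (s,t) P)"
proof -
  obtain s where "s \<in> S" "piso T S dT dS (insert (t,s) (P\<inverse>))"
    using piso_forth[OF umT umS eS piso_conv[OF P] t] by auto
  then have "piso S T dS dT ((insert (t,s) (P\<inverse>))\<inverse>)" using piso_conv by fastforce
  moreover have "(insert (t,s) (P\<inverse>))\<inverse> = insert (s,t) P" by auto
  ultimately show ?thesis using \<open>s \<in> S\<close> by (intro bexI[of _ s]) auto
qed

definition bf_step where
  "bf_step S T dS dT a b P = (let P1 = (SOME P'. piso S T dS dT P' \<and> P \<subseteq> P' \<and> (\<exists>t. (a,t) \<in> P'))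
     in SOME P''. piso S T dS dT P'' \<and> P1 \<subseteq> P'' \<and> (\<exists>s. (s,b) \<in> P''))"

lemma bf_step:
  assumes umS: "um S dS" and umT: "um T dT" and eS: "extp S dS" and eT: "extp T dT"
    and P: "piso S T dS dT P" and a: "a \<in> S" and b: "b \<in> T"
  shows "piso S T dS dT (bf_step S T dS dT a b P) \<and> P \<subseteq> bf_step S T dS dT a b P \<and>
    (\<exists>t. (a,t) \<in> bf_step S T dS dT a b P) \<and> (\<exists>s. (s,b) \<in> bf_step S T dS dT a b P)"
proof -
  define P1 where "P1 = (SOME P'. piso S T dS dT P' \<and> P \<subseteq> P' \<and> (\<exists>t. (a,t) \<in> P'))"
  have "\<exists>P'. piso S T dS dT P' \<and> P \<subseteq> P' \<and> (\<exists>t. (a,t) \<in> P')"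
    using piso_forth[OF umS umT eT P a] by auto
  then have P1: "piso S T dS dT P1 \<and> P \<subseteq> P1 \<and> (\<exists>t. (a,t) \<in> P1)"
    unfolding P1_def by (rule someI_ex)
  have "\<exists>P''. piso S T dS dT P'' \<and> P1 \<subseteq> P'' \<and> (\<exists>s. (s,b) \<in> P'')"
    using piso_back[OF umS umT eS _ b] P1 by blast
  define P2 where "P2 = (SOME P''. piso S T dS dT P'' \<and> P1 \<subseteq> P'' \<and> (\<exists>s. (s,b) \<in> P''))"
  have P2: "piso S T dS dT P2 \<and> P1 \<subseteq> P2 \<and> (\<exists>s. (s,b) \<in> P2)"
    unfolding P2_def by (rule someI_ex) fact
  have eq: "bf_step S T dS dT a b P = P2" unfolding bf_step_def Let_def P1_def[symmetric] P2_def ..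
  show ?thesis unfolding eq using P1 P2 by blast
qed

lemma extp_nonempty: "extp S dS \<Longrightarrow> S \<noteq> {}"
  unfolding extp_def by (metis empty_iff empty_subsetI finite.emptyI)

lemma back_and_forth:
  assumes umS: "um S dS" and umT: "um T dT" and eS: "extp S dS" and eT: "extp T dT"
    and cS: "countable S" and cT: "countable T"
  shows "\<exists>\<psi>. bij_betw \<psi> S T \<and> (\<forall>x\<in>S. \<forall>y\<in>S. dT (\<psi> x) (\<psi> y) = dS x y)"
proof -
  have Sne: "S \<noteq> {}" and Tne: "T \<noteq> {}" using extp_nonempty eS eT by auto
  define eS' where "eS' = from_nat_into S"
  define eT' where "eT' = from_nat_into T"
  have eSin: "eS' n \<in> S" for n using Sne unfolding eS'_def by (rule from_nat_into)
  have eTin: "eT' n \<in> T" for n using Tne unfolding eT'_def by (rule from_nat_into)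
  define Ps where "Ps = rec_nat {} (\<lambda>n P. bf_step S T dS dT (eS' n) (eT' n) P)"
  have Ps0: "Ps 0 = {}" and PsS: "Ps (Suc n) = bf_step S T dS dT (eS' n) (eT' n) (Ps n)" for n
    unfolding Ps_def by simp_all
  have piso0: "piso S T dS dT {}" unfolding piso_def by auto
  have Pn: "piso S T dS dT (Ps n)" for n
  proof (induction n)
    case 0 then show ?case using Ps0 piso0 by simp
  next
    case (Suc n) then show ?case using bf_step[OF umS umT eS eT Suc eSin eTin] PsS by simp
  qed
  have Pstep: "Ps n \<subseteq> Ps (Suc n) \<and> (\<exists>t. (eS' n, t) \<in> Ps (Suc n)) \<and> (\<exists>s. (s, eT' n) \<in> Ps (Suc n))" for n
    using bf_step[OF umS umT eS eT Pn eSin eTin] PsS by simp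
  have mono: "Ps m \<subseteq> Ps n" if "m \<le> n" for m n
    using lift_Suc_mono_le[of Ps, OF _ that] Pstep by blast
  define R where "R = (\<Union>n. Ps n)"
  have PnST: "Ps n \<subseteq> S \<times> T" for n using Pn[of n] unfolding piso_def by blast
  have RST: "R \<subseteq> S \<times> T" using PnST unfolding R_def by blast
  have Rd: "dT b b' = dS a a'" if H: "(a,b) \<in> R" "(a',b') \<in> R" for a b a' b'
  proof -
    obtain m n where "(a,b) \<in> Ps m" "(a',b') \<in> Ps n" using H unfolding R_def by auto
    then have "(a,b) \<in> Ps (max m n)" "(a',b') \<in> Ps (max m n)" using mono[of m "max m n"] mono[of n "max m n"] by auto
    then show ?thesis using Pn[of "max m n"] unfolding piso_def by auto
  qed
  note uS = umS[unfolded um_def] and uT = umT[unfolded um_def]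
  have Rtot: "\<exists>t. (x,t) \<in> R" if H: "x \<in> S" for x
  proof -
    obtain n where "eS' n = x" using from_nat_into_surj[OF cS H] unfolding eS'_def by auto
    then show ?thesis using Pstep[of n] unfolding R_def by auto
  qed
  have Rsur: "\<exists>s. (s,y) \<in> R" if H: "y \<in> T" for y
  proof -
    obtain n where "eT' n = y" using from_nat_into_surj[OF cT H] unfolding eT'_def by auto
    then show ?thesis using Pstep[of n] unfolding R_def by auto
  qed
  have Rfun: "t = t'" if H: "(x,t) \<in> R" "(x,t') \<in> R" for x t t'
  proof -
    have xs: "x \<in> S" "t \<in> T" "t' \<in> T" using H RST by auto
    have "dS x x = 0" using umD(4)[OF umS xs(1) xs(1)] .
    then have "dT t t' = 0" using Rd[OF H] by simp
    then show ?thesis using umD(3)[OF umT xs(2) xs(3)] by simp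
  qed
  define \<psi> where "\<psi> x = (SOME t. (x,t) \<in> R)" for x
  have psiR: "(x, \<psi> x) \<in> R" if "x \<in> S" for x unfolding \<psi>_def using Rtot[OF that] by (rule someI_ex)
  have iso: "dT (\<psi> x) (\<psi> y) = dS x y" if "x \<in> S" "y \<in> S" for x y
    using Rd[OF psiR[OF that(1)] psiR[OF that(2)]] .
  have "inj_on \<psi> S"
  proof (rule inj_onI)
    fix x y assume xy: "x \<in> S" "y \<in> S" "\<psi> x = \<psi> y"
    have "\<psi> x \<in> T" using psiR[OF xy(1)] RST by auto
    then have "dS x y = 0" using iso[OF xy(1,2)] umD(4)[OF umT] xy(3) by simp
    then show "x = y" using umD(3)[OF umS xy(1) xy(2)] by simp
  qed
  moreover have "\<psi> ` S = T"
  proof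
    show "\<psi> ` S \<subseteq> T" using psiR RST by auto
    show "T \<subseteq> \<psi> ` S"
    proof
      fix y assume "y \<in> T"
      then obtain s where s: "(s,y) \<in> R" using Rsur by auto
      then have "s \<in> S" using RST by auto
      then have "\<psi> s = y" using Rfun[OF psiR s] by simp
      then show "y \<in> \<psi> ` S" using \<open>s \<in> S\<close> by auto
    qed
  qed
  ultimately show ?thesis using iso unfolding bij_betw_def by auto
qed

definition Vset :: "'w set \<Rightarrow> (rat \<Rightarrow> 'w option) set" where
  "Vset W = {x. (\<forall>q. q \<le> 0 \<longrightarrow> x q = None) \<and> finite {q. x q \<noteq> None} \<and> (\<forall>q. set_option (x q) \<subseteq> W)}"

definition dV :: "(rat \<Rightarrow> 'w option) \<Rightarrow> (rat \<Rightarrow> 'w option) \<Rightarrow> rat" where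
  "dV x y = (if x = y then 0 else Max {q. x q \<noteq> y q})"

lemma diff_finite: "x \<in> Vset W \<Longrightarrow> y \<in> Vset W \<Longrightarrow> finite {q. x q \<noteq> y q}"
proof -
  assume "x \<in> Vset W" "y \<in> Vset W"
  then have "finite ({q. x q \<noteq> None} \<union> {q. y q \<noteq> None})" unfolding Vset_def by auto
  moreover have "{q. x q \<noteq> y q} \<subseteq> {q. x q \<noteq> None} \<union> {q. y q \<noteq> None}" by auto
  ultimately show ?thesis by (rule finite_subset[rotated])
qed

lemma diff_pos:
  assumes "x \<in> Vset W" "y \<in> Vset W" "x q \<noteq> y q" shows "0 < q"
proof (rule ccontr)
  assume "\<not> 0 < q"
  then have "q \<le> 0" by simp
  then have "x q = None" "y q = None" using assms(1,2) unfolding Vset_def by auto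
  then show False using assms(3) by simp
qed

lemma dV_ge: "x \<in> Vset W \<Longrightarrow> y \<in> Vset W \<Longrightarrow> x q \<noteq> y q \<Longrightarrow> q \<le> dV x y"
  unfolding dV_def using diff_finite by (auto intro: Max_ge)

lemma dV_mem: "x \<in> Vset W \<Longrightarrow> y \<in> Vset W \<Longrightarrow> x \<noteq> y \<Longrightarrow> x (dV x y) \<noteq> y (dV x y)"
proof -
  assume a: "x \<in> Vset W" "y \<in> Vset W" "x \<noteq> y"
  then have "{q. x q \<noteq> y q} \<noteq> {}" by auto
  then have "Max {q. x q \<noteq> y q} \<in> {q. x q \<noteq> y q}" using diff_finite[OF a(1,2)] by (rule Max_in[rotated])
  then show ?thesis using a unfolding dV_def by auto
qed

lemma dV_pos: "x \<in> Vset W \<Longrightarrow> y \<in> Vset W \<Longrightarrow> x \<noteq> y \<Longrightarrow> 0 < dV x y"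
proof -
  assume a: "x \<in> Vset W" "y \<in> Vset W" "x \<noteq> y"
  show ?thesis using diff_pos[OF a(1,2) dV_mem[OF a]] .
qed

lemma dV_eq0: "x \<in> Vset W \<Longrightarrow> y \<in> Vset W \<Longrightarrow> (dV x y = 0) = (x = y)"
proof -
  assume a: "x \<in> Vset W" "y \<in> Vset W"
  show ?thesis
  proof (cases "x = y")
    case True then show ?thesis by (simp add: dV_def)
  next
    case False then show ?thesis using dV_pos[OF a False] by simp
  qed
qed

lemma dV_nonneg: "x \<in> Vset W \<Longrightarrow> y \<in> Vset W \<Longrightarrow> 0 \<le> dV x y"
proof -
  assume a: "x \<in> Vset W" "y \<in> Vset W"
  show ?thesis
  proof (cases "x = y")
    case True then show ?thesis by (simp add: dV_def)
  next
    case False then show ?thesis using dV_pos[OF a False] by simp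
  qed
qed

lemma dV_sym: "dV x y = dV y x"
proof (cases "x = y")
  case True then show ?thesis by (simp add: dV_def)
next
  case False
  then have "y \<noteq> x" by auto
  moreover have "{q. x q \<noteq> y q} = {q. y q \<noteq> x q}" by auto
  ultimately show ?thesis using False by (simp add: dV_def)
qed

lemma dV_ultra: "x \<in> Vset W \<Longrightarrow> y \<in> Vset W \<Longrightarrow> w \<in> Vset W \<Longrightarrow> dV x w \<le> max (dV x y) (dV y w)"
proof -
  assume a: "x \<in> Vset W" "y \<in> Vset W" "w \<in> Vset W"
  show ?thesis
  proof (cases "x = w")
    case True then show ?thesis using dV_nonneg[OF a(1,2)] unfolding dV_def by simp
  next
    case False
    then have m: "x (dV x w) \<noteq> w (dV x w)" using dV_mem a by blast
    show ?thesis
    proof (cases "x (dV x w) = y (dV x w)")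
      case True
      then have "y (dV x w) \<noteq> w (dV x w)" using m by simp
      then have "dV x w \<le> dV y w" using dV_ge a by blast
      then show ?thesis by simp
    next
      case False
      then have "dV x w \<le> dV x y" using dV_ge a by blast
      then show ?thesis by simp
    qed
  qed
qed

lemma um_V: "um (Vset W) dV"
  unfolding um_def
proof (intro conjI ballI)
  fix x y assume xy: "x \<in> Vset W" "y \<in> Vset W"
  show "0 \<le> dV x y" using dV_nonneg[OF xy] .
  show "dV x y = dV y x" by (rule dV_sym)
  show "(dV x y = 0) = (x = y)" using dV_eq0[OF xy] .
next
  fix x y w assume "x \<in> Vset W" "y \<in> Vset W" "w \<in> Vset W"
  then show "dV x w \<le> max (dV x y) (dV y w)" by (rule dV_ultra)
qed

lemma ext_V:
  assumes inf: "infinite W"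
  shows "extp (Vset W) dV"
  unfolding extp_def
proof (intro allI impI, elim conjE)
  fix A r assume fA: "finite A" and AV: "A \<subseteq> Vset W" and rpos: "\<forall>a\<in>A. 0 < r a"
    and cond: "\<forall>a\<in>A. \<forall>b\<in>A. dV a b \<le> max (r a) (r b) \<and> r a \<le> max (dV a b) (r b)"
  show "\<exists>u\<in>Vset W. \<forall>a\<in>A. dV u a = r a"
  proof (cases "A = {}")
    case True
    have "(\<lambda>q. None) \<in> Vset W" unfolding Vset_def by auto
    then show ?thesis using True by auto
  next
    case False
    have "Min (r ` A) \<in> r ` A" using False fA by auto
    then obtain a0 where a0: "a0 \<in> A" "r a0 = Min (r ` A)" by auto
    have a0min: "r a0 \<le> r a" if "a \<in> A" for a using a0 fA that by auto
    define r0 where "r0 = r a0"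
    have r0pos: "0 < r0" using rpos a0 unfolding r0_def by auto
    have "finite ((\<lambda>a. the (a r0)) ` A)" using fA by auto
    then have "infinite (W - (\<lambda>a. the (a r0)) ` A)" using inf by (rule Diff_infinite_finite)
    then have "W - (\<lambda>a. the (a r0)) ` A \<noteq> {}" by (metis finite.emptyI)
    then obtain w where wW: "w \<in> W" and wn: "w \<notin> (\<lambda>a. the (a r0)) ` A" by blast
    have wfresh: "a r0 \<noteq> Some w" if "a \<in> A" for a using wn that by force
    define u where "u q = (if r0 < q then a0 q else if q = r0 then Some w else None)" for q
    have a0V: "a0 \<in> Vset W" using a0 AV by auto
    have uV: "u \<in> Vset W"
      unfolding Vset_def
    proof (intro CollectI conjI allI impI)
      fix q :: rat assume "q \<le> 0" then show "u q = None" using r0pos unfolding u_def by auto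
    next
      have "{q. u q \<noteq> None} \<subseteq> insert r0 {q. a0 q \<noteq> None}" unfolding u_def by auto
      moreover have "finite {q. a0 q \<noteq> None}" using a0V unfolding Vset_def by auto
      ultimately show "finite {q. u q \<noteq> None}" using finite_subset by blast
    next
      fix q show "set_option (u q) \<subseteq> W" using a0V wW unfolding u_def Vset_def by auto
    qed
    have "dV u a = r a" if aA: "a \<in> A" for a
    proof -
      have aV: "a \<in> Vset W" using aA AV by auto
      have "u r0 = Some w" unfolding u_def by simp
      then have ua: "u \<noteq> a" using wfresh[OF aA] by auto
      have c1: "dV a a0 \<le> max (r a) r0" "r a \<le> max (dV a a0) r0" using cond[rule_format, OF aA a0(1)] unfolding r0_def by auto
      have sym: "dV a a0 = dV a0 a" by (rule dV_sym)
      have ra0: "r0 \<le> r a" using a0min[OF aA] unfolding r0_def .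
      define m where "m = max (dV a0 a) r0"
      have mdiff: "u m \<noteq> a m"
      proof (cases "r0 < dV a0 a")
        case True
        have "a0 \<noteq> a"
        proof
          assume "a0 = a" then have "dV a0 a = 0" by (simp add: dV_def)
          then show False using True r0pos by simp
        qed
        then have "a0 (dV a0 a) \<noteq> a (dV a0 a)" using dV_mem[OF a0V aV] by blast
        moreover have "m = dV a0 a" using True unfolding m_def by simp
        moreover have "u (dV a0 a) = a0 (dV a0 a)" using True unfolding u_def by simp
        ultimately show ?thesis by simp
      next
        case False
        then have "m = r0" unfolding m_def by simp
        moreover have "u r0 = Some w" unfolding u_def by simp
        ultimately show ?thesis using wfresh[OF aA] by simp
      qed
      have mle: "q \<le> m" if qd: "u q \<noteq> a q" for q
      proof (cases "r0 < q")
        case True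
        then have "u q = a0 q" unfolding u_def by simp
        then have "a0 q \<noteq> a q" using qd by simp
        then have "q \<le> dV a0 a" by (rule dV_ge[OF a0V aV])
        then show ?thesis unfolding m_def by simp
      next
        case False then show ?thesis unfolding m_def by simp
      qed
      have "dV u a = m"
      proof -
        have "dV u a = Max {q. u q \<noteq> a q}" using ua unfolding dV_def by simp
        also have "\<dots> = m"
        proof (rule Max_eqI)
          show "finite {q. u q \<noteq> a q}" by (rule diff_finite[OF uV aV])
          show "m \<in> {q. u q \<noteq> a q}" using mdiff by simp
          show "\<And>y. y \<in> {q. u q \<noteq> a q} \<Longrightarrow> y \<le> m" using mle by simp
        qed
        finally show ?thesis .
      qed
      moreover have "m = r a"
      proof (cases "r0 < dV a0 a")
        case True
        then have "m = dV a0 a" unfolding m_def by simp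
        moreover have "dV a0 a \<le> r a" using c1(1) True sym by (simp add: max_def split: if_splits)
        moreover have "r a \<le> dV a0 a" using c1(2) True sym by (simp add: max_def split: if_splits)
        ultimately show ?thesis by simp
      next
        case False
        then have "m = r0" unfolding m_def by simp
        moreover have "r a \<le> r0" using c1(2) False sym by (simp add: max_def split: if_splits)
        ultimately show ?thesis using ra0 by simp
      qed
      ultimately show ?thesis by simp
    qed
    then show ?thesis using uV by auto
  qed
qed

lemma countable_V:
  fixes W :: "'w set"
  assumes "countable W"
  shows "countable (Vset W)"
proof -
  define G where "G x = {(q, w). x q = Some w}" for x :: "rat \<Rightarrow> 'w option"
  have "inj_on G (Vset W)"
  proof (rule inj_onI)
    fix x y assume "x \<in> Vset W" "y \<in> Vset W" "G x = G y"
    show "x = y"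
    proof
      fix q
      have H: "(x q = Some b) = (y q = Some b)" for b
        using \<open>G x = G y\<close> unfolding G_def by (auto simp: set_eq_iff)
      show "x q = y q" using H by (metis not_None_eq)
    qed
  qed
  moreover have "G ` Vset W \<subseteq> {A. finite A \<and> A \<subseteq> (UNIV :: rat set) \<times> W}"
  proof
    fix g assume "g \<in> G ` Vset W"
    then obtain x where x: "x \<in> Vset W" "g = G x" by auto
    have "G x \<subseteq> (\<lambda>q. (q, the (x q))) ` {q. x q \<noteq> None}" unfolding G_def by auto
    moreover have "finite {q. x q \<noteq> None}" using x unfolding Vset_def by auto
    moreover have "G x \<subseteq> UNIV \<times> W" using x unfolding G_def Vset_def by auto
    ultimately have "finite (G x)" "G x \<subseteq> UNIV \<times> W" using finite_subset by blast+
    then show "g \<in> {A. finite A \<and> A \<subseteq> UNIV \<times> W}" using x(2) by simp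
  qed
  moreover have "countable {A. finite A \<and> A \<subseteq> (UNIV :: rat set) \<times> W}"
    using assms by (intro countable_Collect_finite_subset) auto
  ultimately have "countable (G ` Vset W)" using countable_subset by blast
  then show ?thesis using \<open>inj_on G (Vset W)\<close> by (rule countable_image_inj_on)
qed

definition hatm :: "('w \<Rightarrow> 'w) \<Rightarrow> (rat \<Rightarrow> 'w option) \<Rightarrow> (rat \<Rightarrow> 'w option)" where
  "hatm \<sigma> x = (\<lambda>q. map_option \<sigma> (x q))"

lemma hatm_iso: "inj \<sigma> \<Longrightarrow> dV (hatm \<sigma> x) (hatm \<sigma> y) = dV x y"
proof -
  assume i: "inj \<sigma>"
  have e: "(hatm \<sigma> x q = hatm \<sigma> y q) = (x q = y q)" for q
    unfolding hatm_def using option.inj_map[OF i] by (simp add: inj_eq)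
  then have e2: "(hatm \<sigma> x = hatm \<sigma> y) = (x = y)" by (auto simp: fun_eq_iff)
  show ?thesis unfolding dV_def e2 e by simp
qed

lemma hatm_V:
  assumes "\<sigma> ` W \<subseteq> W" "x \<in> Vset W" shows "hatm \<sigma> x \<in> Vset W"
proof -
  have "set_option (x q) \<subseteq> W" for q using assms(2) unfolding Vset_def by auto
  then have "\<sigma> ` set_option (x q) \<subseteq> \<sigma> ` W" for q by (rule image_mono)
  then have "set_option (map_option \<sigma> (x q)) \<subseteq> W" for q using assms(1) by (auto simp: option.set_map)
  then show ?thesis using assms(2) unfolding Vset_def hatm_def by auto
qed

lemma hatm_comp: "hatm (\<sigma> \<circ> \<tau>) = hatm \<sigma> \<circ> hatm \<tau>"
  unfolding hatm_def by (auto simp: fun_eq_iff option.map_comp)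

lemma hatm_id: "hatm id = id"
  unfolding hatm_def by (auto simp: fun_eq_iff option.map_id)

definition basic_set :: "'a set \<Rightarrow> 'd::linorder set \<Rightarrow> ('a \<Rightarrow> 'a \<Rightarrow> 'd) \<Rightarrow> (('a \<Rightarrow> 'a) \<times> ('d \<Rightarrow> 'd)) \<Rightarrow> 'a set \<Rightarrow> 'd set \<Rightarrow> (('a \<Rightarrow> 'a) \<times> ('d \<Rightarrow> 'd)) set" where
  "basic_set X D d h0 F E = {h \<in> dc_aut X D d. (\<forall>x\<in>F. fst h x = fst h0 x) \<and> (\<forall>e\<in>E. snd h e = snd h0 e)}"

lemma basis_eq:
  "{{h \<in> dc_aut X D d. (\<forall>x\<in>F. fst h x = fst h0 x) \<and> (\<forall>e\<in>E. snd h e = snd h0 e)} | h0 F E.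
          h0 \<in> dc_aut X D d \<and> finite F \<and> F \<subseteq> X \<and> finite E \<and> E \<subseteq> D}
   = {basic_set X D d h0 F E | h0 F E. h0 \<in> dc_aut X D d \<and> finite F \<and> F \<subseteq> X \<and> finite E \<and> E \<subseteq> D}"
  unfolding basic_set_def by simp

lemma aut_top_alt: "aut_top X D d = subtopology (topology_generated_by
   {basic_set X D d h0 F E | h0 F E. h0 \<in> dc_aut X D d \<and> finite F \<and> F \<subseteq> X \<and> finite E \<and> E \<subseteq> D}) (dc_aut X D d)"
  unfolding aut_top_def basis_eq ..

lemma basic_set_full: "basic_set X D d (id, id) {} {} = dc_aut X D d"
  unfolding basic_set_def by simp

lemma topspace_aut: "topspace (aut_top X D d) = dc_aut X D d"
proof -
  have "dc_aut X D d \<in> {basic_set X D d h0 F E | h0 F E. h0 \<in> dc_aut X D d \<and> finite F \<and> F \<subseteq> X \<and> finite E \<and> E \<subseteq> D}"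
    using dc_aut_id basic_set_full by (metis (mono_tags, lifting) empty_subsetI finite.emptyI mem_Collect_eq)
  then have "dc_aut X D d \<subseteq> \<Union>{basic_set X D d h0 F E | h0 F E. h0 \<in> dc_aut X D d \<and> finite F \<and> F \<subseteq> X \<and> finite E \<and> E \<subseteq> D}"
    by blast
  then show ?thesis unfolding aut_top_alt by auto
qed

lemma basic_open:
  assumes "h0 \<in> dc_aut X D d" "finite F" "F \<subseteq> X" "finite E" "E \<subseteq> D"
  shows "openin (aut_top X D d) (basic_set X D d h0 F E)"
proof -
  have "openin (topology_generated_by
   {basic_set X D d h0 F E | h0 F E. h0 \<in> dc_aut X D d \<and> finite F \<and> F \<subseteq> X \<and> finite E \<and> E \<subseteq> D}) (basic_set X D d h0 F E)"
    using assms by (intro topology_generated_by_Basis) blast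
  moreover have "basic_set X D d h0 F E = basic_set X D d h0 F E \<inter> dc_aut X D d"
    unfolding basic_set_def by auto
  ultimately show ?thesis unfolding aut_top_alt openin_subtopology by blast
qed

lemma cont_into_aut:
  assumes img: "\<And>t. t \<in> topspace T0 \<Longrightarrow> f t \<in> dc_aut Y E dY"
    and opn: "\<And>h0 F E'. h0 \<in> dc_aut Y E dY \<Longrightarrow> finite F \<Longrightarrow> F \<subseteq> Y \<Longrightarrow> finite E' \<Longrightarrow> E' \<subseteq> E \<Longrightarrow>
        openin T0 {t \<in> topspace T0. f t \<in> basic_set Y E dY h0 F E'}"
  shows "continuous_map T0 (aut_top Y E dY) f"
  unfolding aut_top_alt
proof (rule continuous_map_into_subtopology)
  show "f \<in> topspace T0 \<rightarrow> dc_aut Y E dY" using img by auto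
  show "continuous_map T0 (topology_generated_by
     {basic_set Y E dY h0 F E' | h0 F E'. h0 \<in> dc_aut Y E dY \<and> finite F \<and> F \<subseteq> Y \<and> finite E' \<and> E' \<subseteq> E}) f"
  proof (rule continuous_on_generated_topo)
    fix B assume "B \<in> {basic_set Y E dY h0 F E' | h0 F E'. h0 \<in> dc_aut Y E dY \<and> finite F \<and> F \<subseteq> Y \<and> finite E' \<and> E' \<subseteq> E}"
    then obtain h0 F E' where B: "B = basic_set Y E dY h0 F E'" "h0 \<in> dc_aut Y E dY" "finite F" "F \<subseteq> Y" "finite E'" "E' \<subseteq> E"
      by blast
    have "f -` B \<inter> topspace T0 = {t \<in> topspace T0. f t \<in> basic_set Y E dY h0 F E'}" using B(1) by auto
    then show "openin T0 (f -` B \<inter> topspace T0)" using opn[OF B(2-6)] by simp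
  next
    have "dc_aut Y E dY \<in> {basic_set Y E dY h0 F E' | h0 F E'. h0 \<in> dc_aut Y E dY \<and> finite F \<and> F \<subseteq> Y \<and> finite E' \<and> E' \<subseteq> E}"
      using dc_aut_id basic_set_full by (metis (mono_tags, lifting) empty_subsetI finite.emptyI mem_Collect_eq)
    then show "f ` topspace T0 \<subseteq> \<Union> {basic_set Y E dY h0 F E' | h0 F E'. h0 \<in> dc_aut Y E dY \<and> finite F \<and> F \<subseteq> Y \<and> finite E' \<and> E' \<subseteq> E}"
      using img by blast
  qed
qed

definition sig :: "(('a \<Rightarrow> 'a) \<times> ('d \<Rightarrow> 'd)) \<Rightarrow> ('a + 'd) \<times> nat \<Rightarrow> ('a + 'd) \<times> nat" where
  "sig h = (\<lambda>p. (map_sum (fst h) (snd h) (fst p), snd p))"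

lemma sig_inj:
  assumes "h \<in> dc_aut X D d" shows "inj (sig h)"
proof -
  obtain f g where h: "h = (f, g)" by (cases h)
  have "bij f" "bij g" using dc_aut_bij assms h by auto
  then have "inj f" "inj g" by (auto simp: bij_is_inj)
  then have "inj (map_sum f g)" by (simp add: sum.inj_map)
  then show ?thesis unfolding sig_def h inj_def by auto
qed

lemma sig_W:
  assumes "h \<in> dc_aut X D d" shows "sig h ` ((X <+> D) \<times> UNIV) \<subseteq> (X <+> D) \<times> UNIV"
proof -
  obtain f g where h: "h = (f, g)" by (cases h)
  have "f x \<in> X" if "x \<in> X" for x using dc_autD(1)[of f g X D d] assms h that unfolding bij_betw_def by auto
  moreover have "g x \<in> D" if "x \<in> D" for x using dc_autD(3)[of f g X D d] assms h that unfolding bij_betw_def by auto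
  ultimately show ?thesis unfolding sig_def h by auto
qed

lemma sig_comp: "sig (f \<circ> f', g \<circ> g') = sig (f, g) \<circ> sig (f', g')"
  unfolding sig_def by (auto simp: fun_eq_iff sum.map_comp)

lemma sig_id: "sig (id, id) = id"
  unfolding sig_def by (auto simp: fun_eq_iff sum.map_id)

locale emb =
  fixes X :: "'a set" and D :: "'d::linorder set" and d :: "'a \<Rightarrow> 'a \<Rightarrow> 'd"
    and U :: "'u set" and dU :: "'u \<Rightarrow> 'u \<Rightarrow> rat"
    and \<psi> :: "'u \<Rightarrow> rat \<Rightarrow> (('a + 'd) \<times> nat) option"
  assumes psi_bij: "bij_betw \<psi> U (Vset ((X <+> D) \<times> UNIV))"
    and psi_iso: "\<And>x y. x \<in> U \<Longrightarrow> y \<in> U \<Longrightarrow> dV (\<psi> x) (\<psi> y) = dU x y"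
begin

abbreviation "VV \<equiv> Vset ((X <+> D) \<times> (UNIV :: nat set))"
definition "psi_i = inv_into U \<psi>"
definition "hat h = hatm (sig h)"
definition "Phi h = ((\<lambda>u. if u \<in> U then psi_i (hat h (\<psi> u)) else u), (id :: rat \<Rightarrow> rat))"

lemma psi_in: "u \<in> U \<Longrightarrow> \<psi> u \<in> VV"
  using psi_bij bij_betwE by blast

lemma psii_bij: "bij_betw psi_i VV U"
  unfolding psi_i_def by (rule bij_betw_inv_into[OF psi_bij])

lemma psii_in: "v \<in> VV \<Longrightarrow> psi_i v \<in> U"
  using psii_bij bij_betwE by blast

lemma psi_psii: "v \<in> VV \<Longrightarrow> \<psi> (psi_i v) = v"
  unfolding psi_i_def using psi_bij by (simp add: bij_betw_inv_into_right)

lemma psii_psi: "u \<in> U \<Longrightarrow> psi_i (\<psi> u) = u"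
  unfolding psi_i_def using psi_bij by (simp add: bij_betw_inv_into_left)

lemma psii_iso: "v \<in> VV \<Longrightarrow> v' \<in> VV \<Longrightarrow> dU (psi_i v) (psi_i v') = dV v v'"
proof -
  assume a: "v \<in> VV" "v' \<in> VV"
  have "dV (\<psi> (psi_i v)) (\<psi> (psi_i v')) = dU (psi_i v) (psi_i v')" by (rule psi_iso[OF psii_in[OF a(1)] psii_in[OF a(2)]])
  then show ?thesis using psi_psii[OF a(1)] psi_psii[OF a(2)] by simp
qed

lemma psii_inj: "v \<in> VV \<Longrightarrow> v' \<in> VV \<Longrightarrow> psi_i v = psi_i v' \<Longrightarrow> v = v'"
proof -
  assume a: "v \<in> VV" "v' \<in> VV" "psi_i v = psi_i v'"
  then have "\<psi> (psi_i v) = \<psi> (psi_i v')" by simp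
  then show ?thesis using psi_psii[OF a(1)] psi_psii[OF a(2)] by simp
qed

lemma hat_in: "h \<in> dc_aut X D d \<Longrightarrow> v \<in> VV \<Longrightarrow> hat h v \<in> VV"
  unfolding hat_def by (rule hatm_V[OF sig_W])

lemma hat_iso: "h \<in> dc_aut X D d \<Longrightarrow> dV (hat h v) (hat h v') = dV v v'"
  unfolding hat_def by (rule hatm_iso[OF sig_inj])

lemma hat_mult: "hat (fst h \<circ> fst k, snd h \<circ> snd k) = hat h \<circ> hat k"
  unfolding hat_def by (cases h; cases k) (simp add: sig_comp hatm_comp)

lemma hat_one: "hat (id, id) = id"
  unfolding hat_def by (simp add: sig_id hatm_id)

lemma hat_bij:
  assumes h: "h \<in> dc_aut X D d" shows "bij_betw (hat h) VV VV"
proof -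
  obtain f g where fg: "h = (f, g)" by (cases h)
  have hi: "(inv_into UNIV f, inv_into UNIV g) \<in> dc_aut X D d" using dc_aut_inv h fg by simp
  have b: "bij f" "bij g" using dc_aut_bij h fg by auto
  have c1: "f \<circ> inv_into UNIV f = id" "g \<circ> inv_into UNIV g = id" using b by (simp_all add: bij_is_surj surj_iff[symmetric])
  have c2: "inv_into UNIV f \<circ> f = id" "inv_into UNIV g \<circ> g = id" using b by (simp_all add: bij_is_inj)
  have e1: "hat h \<circ> hat (inv_into UNIV f, inv_into UNIV g) = id"
  proof -
    have "hat h \<circ> hat (inv_into UNIV f, inv_into UNIV g) = hat (f \<circ> inv_into UNIV f, g \<circ> inv_into UNIV g)"
      using hat_mult[of h "(inv_into UNIV f, inv_into UNIV g)"] fg by simp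
    also have "\<dots> = id" using c1 hat_one by simp
    finally show ?thesis .
  qed
  have e2: "hat (inv_into UNIV f, inv_into UNIV g) \<circ> hat h = id"
  proof -
    have "hat (inv_into UNIV f, inv_into UNIV g) \<circ> hat h = hat (inv_into UNIV f \<circ> f, inv_into UNIV g \<circ> g)"
      using hat_mult[of "(inv_into UNIV f, inv_into UNIV g)" h] fg by simp
    also have "\<dots> = id" using c2 hat_one by simp
    finally show ?thesis .
  qed
  show ?thesis
  proof (rule bij_betw_byWitness[where f' = "hat (inv_into UNIV f, inv_into UNIV g)"])
    show "\<forall>a\<in>VV. hat (inv_into UNIV f, inv_into UNIV g) (hat h a) = a" using e2 by (simp add: fun_eq_iff)
    show "\<forall>a'\<in>VV. hat h (hat (inv_into UNIV f, inv_into UNIV g) a') = a'" using e1 by (simp add: fun_eq_iff)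
    show "hat h ` VV \<subseteq> VV" using hat_in[OF h] by auto
    show "hat (inv_into UNIV f, inv_into UNIV g) ` VV \<subseteq> VV" using hat_in[OF hi] by auto
  qed
qed

lemma Phi_in:
  assumes h: "h \<in> dc_aut X D d" shows "Phi h \<in> dc_aut U {q. 0 \<le> q} dU"
proof -
  have b: "bij_betw (psi_i \<circ> hat h \<circ> \<psi>) U U"
    using bij_betw_trans[OF psi_bij bij_betw_trans[OF hat_bij[OF h] psii_bij]] by (simp add: comp_assoc)
  have "bij_betw (fst (Phi h)) U U"
    using b by (rule bij_betw_cong[THEN iffD1, rotated]) (simp add: Phi_def)
  moreover have "dU (fst (Phi h) x) (fst (Phi h) y) = snd (Phi h) (dU x y)" if "x \<in> U" "y \<in> U" for x y
  proof -
    have "dU (fst (Phi h) x) (fst (Phi h) y) = dU (psi_i (hat h (\<psi> x))) (psi_i (hat h (\<psi> y)))"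
      using that by (simp add: Phi_def)
    also have "\<dots> = dV (hat h (\<psi> x)) (hat h (\<psi> y))"
      using psii_iso hat_in[OF h] psi_in that by simp
    also have "\<dots> = dU x y" using hat_iso[OF h] psi_iso that by simp
    finally show ?thesis by (simp add: Phi_def)
  qed
  ultimately show ?thesis
    unfolding dc_aut_def by (auto simp: Phi_def strict_mono_on_def)
qed

lemma Phi_mult:
  assumes h: "h \<in> dc_aut X D d" and k: "k \<in> dc_aut X D d"
  shows "Phi (fst h \<circ> fst k, snd h \<circ> snd k) = (fst (Phi h) \<circ> fst (Phi k), snd (Phi h) \<circ> snd (Phi k))"
proof -
  have "fst (Phi (fst h \<circ> fst k, snd h \<circ> snd k)) u = fst (Phi h) (fst (Phi k) u)" for u
  proof (cases "u \<in> U")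
    case True
    have i: "hat k (\<psi> u) \<in> VV" using hat_in[OF k psi_in[OF True]] .
    then have "psi_i (hat k (\<psi> u)) \<in> U" by (rule psii_in)
    then show ?thesis using True i by (simp add: Phi_def hat_mult psi_psii)
  next
    case False then show ?thesis by (simp add: Phi_def)
  qed
  then show ?thesis by (simp add: Phi_def fun_eq_iff)
qed

definition "ex x = (\<lambda>q::rat. if q = 1 then Some (Inl x :: 'a + 'd, 0::nat) else None)"
definition "ey e = (\<lambda>q::rat. if q = 1 then Some (Inr e :: 'a + 'd, 0::nat) else None)"

lemma ex_in: "x \<in> X \<Longrightarrow> ex x \<in> VV"
proof -
  assume x: "x \<in> X"
  have "{q. ex x q \<noteq> None} \<subseteq> {1}" unfolding ex_def by auto
  then have "finite {q. ex x q \<noteq> None}" by (rule finite_subset) simp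
  then show ?thesis using x unfolding Vset_def ex_def by auto
qed

lemma ey_in: "e \<in> D \<Longrightarrow> ey e \<in> VV"
proof -
  assume e: "e \<in> D"
  have "{q. ey e q \<noteq> None} \<subseteq> {1}" unfolding ey_def by auto
  then have "finite {q. ey e q \<noteq> None}" by (rule finite_subset) simp
  then show ?thesis using e unfolding Vset_def ey_def by auto
qed

lemma hat_ex: "hat h (ex x) = ex (fst h x)"
  unfolding hat_def hatm_def sig_def ex_def by (auto simp: fun_eq_iff)

lemma hat_ey: "hat h (ey e) = ey (snd h e)"
  unfolding hat_def hatm_def sig_def ey_def by (auto simp: fun_eq_iff)

lemma ex_inj: "ex a = ex b \<Longrightarrow> a = b"
  unfolding ex_def by (drule fun_cong[where x = 1]) simp

lemma ey_inj: "ey a = ey b \<Longrightarrow> a = b"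
  unfolding ey_def by (drule fun_cong[where x = 1]) simp

lemma Phi_ex: "h \<in> dc_aut X D d \<Longrightarrow> x \<in> X \<Longrightarrow> fst (Phi h) (psi_i (ex x)) = psi_i (ex (fst h x))"
  using psii_in[OF ex_in] psi_psii[OF ex_in] by (simp add: Phi_def hat_ex)

lemma Phi_ey: "h \<in> dc_aut X D d \<Longrightarrow> e \<in> D \<Longrightarrow> fst (Phi h) (psi_i (ey e)) = psi_i (ey (snd h e))"
  using psii_in[OF ey_in] psi_psii[OF ey_in] by (simp add: Phi_def hat_ey)

lemma aut_X: "h \<in> dc_aut X D d \<Longrightarrow> x \<in> X \<Longrightarrow> fst h x \<in> X"
proof -
  assume a: "h \<in> dc_aut X D d" "x \<in> X"
  obtain f g where fg: "h = (f, g)" by (cases h)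
  have "bij_betw f X X" using dc_autD(1)[of f g X D d] a(1) fg by simp
  then have "f x \<in> X" using a(2) bij_betwE by blast
  then show ?thesis using fg by simp
qed

lemma aut_D: "h \<in> dc_aut X D d \<Longrightarrow> e \<in> D \<Longrightarrow> snd h e \<in> D"
proof -
  assume a: "h \<in> dc_aut X D d" "e \<in> D"
  obtain f g where fg: "h = (f, g)" by (cases h)
  have "bij_betw g D D" using dc_autD(3)[of f g X D d] a(1) fg by simp
  then have "g e \<in> D" using a(2) bij_betwE by blast
  then show ?thesis using fg by simp
qed

lemma Phi_ex_iff:
  assumes h: "h \<in> dc_aut X D d" and k: "k \<in> dc_aut X D d" and x: "x \<in> X"
  shows "(fst (Phi h) (psi_i (ex x)) = fst (Phi k) (psi_i (ex x))) = (fst h x = fst k x)"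
  using Phi_ex[OF h x] Phi_ex[OF k x] psii_inj[OF ex_in[OF aut_X[OF h x]] ex_in[OF aut_X[OF k x]]] ex_inj
  by auto

lemma Phi_ey_iff:
  assumes h: "h \<in> dc_aut X D d" and k: "k \<in> dc_aut X D d" and e: "e \<in> D"
  shows "(fst (Phi h) (psi_i (ey e)) = fst (Phi k) (psi_i (ey e))) = (snd h e = snd k e)"
  using Phi_ey[OF h e] Phi_ey[OF k e] psii_inj[OF ey_in[OF aut_D[OF h e]] ey_in[OF aut_D[OF k e]]] ey_inj
  by auto

lemma aut_out: "h \<in> dc_aut X D d \<Longrightarrow> x \<notin> X \<Longrightarrow> fst h x = x"
  by (cases h) (simp add: dc_autD(2))

lemma aut_outD: "h \<in> dc_aut X D d \<Longrightarrow> e \<notin> D \<Longrightarrow> snd h e = e"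
  by (cases h) (simp add: dc_autD(5))

lemma Phi_inj: "inj_on Phi (dc_aut X D d)"
proof (rule inj_onI)
  fix h k assume h: "h \<in> dc_aut X D d" and k: "k \<in> dc_aut X D d" and eq: "Phi h = Phi k"
  have "fst h x = fst k x" for x
  proof (cases "x \<in> X")
    case True then show ?thesis using Phi_ex_iff[OF h k True] eq by simp
  next
    case False then show ?thesis using aut_out[OF h False] aut_out[OF k False] by simp
  qed
  moreover have "snd h e = snd k e" for e
  proof (cases "e \<in> D")
    case True then show ?thesis using Phi_ey_iff[OF h k True] eq by simp
  next
    case False then show ?thesis using aut_outD[OF h False] aut_outD[OF k False] by simp
  qed
  ultimately show "h = k" by (simp add: prod_eq_iff fun_eq_iff)
qed

end

context emb
begin

lemma hat_agree:
  assumes h: "h \<in> dc_aut X D d" and k: "k \<in> dc_aut X D d" and v: "v \<in> VV"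
    and ax: "\<And>x q n. x \<in> X \<Longrightarrow> v q = Some (Inl x, n) \<Longrightarrow> fst k x = fst h x"
    and ae: "\<And>e q n. e \<in> D \<Longrightarrow> v q = Some (Inr e, n) \<Longrightarrow> snd k e = snd h e"
  shows "hat k v = hat h v"
proof -
  have "map_option (sig k) (v q) = map_option (sig h) (v q)" for q
  proof (cases "v q")
    case None then show ?thesis by simp
  next
    case (Some p)
    obtain s n where p: "p = (s, n)" by (cases p)
    have "set_option (v q) \<subseteq> (X <+> D) \<times> UNIV" using v unfolding Vset_def by blast
    then have sXD: "s \<in> X <+> D" using Some p by simp
    show ?thesis
    proof (cases s)
      case (Inl x)
      with sXD have x: "x \<in> X" by auto
      have "fst k x = fst h x" using ax[OF x, of q n] Some p Inl by simp
      then show ?thesis using Some p Inl by (simp add: sig_def)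
    next
      case (Inr e)
      with sXD have e: "e \<in> D" by auto
      have "snd k e = snd h e" using ae[OF e, of q n] Some p Inr by simp
      then show ?thesis using Some p Inr by (simp add: sig_def)
    qed
  qed
  then show ?thesis unfolding hat_def hatm_def by (simp add: fun_eq_iff)
qed

lemma cont_Phi: "continuous_map (aut_top X D d) (aut_top U {q. 0 \<le> q} dU) Phi"
proof (rule cont_into_aut)
  fix t assume "t \<in> topspace (aut_top X D d)"
  then have "t \<in> dc_aut X D d" by (simp add: topspace_aut)
  then show "Phi t \<in> dc_aut U {q. 0 \<le> q} dU" by (rule Phi_in)
next
  fix k0 F' and E' :: "rat set" assume k0: "k0 \<in> dc_aut U {q. 0 \<le> q} dU" and fF: "finite F'" "F' \<subseteq> U"
    and fE: "finite E'" "E' \<subseteq> {q. 0 \<le> q}"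
  show "openin (aut_top X D d) {t \<in> topspace (aut_top X D d). Phi t \<in> basic_set U {q. 0 \<le> q} dU k0 F' E'}"
  proof (subst openin_subopen, intro ballI)
    fix h assume hS: "h \<in> {t \<in> topspace (aut_top X D d). Phi t \<in> basic_set U {q. 0 \<le> q} dU k0 F' E'}"
    then have h: "h \<in> dc_aut X D d" and hB: "Phi h \<in> basic_set U {q. 0 \<le> q} dU k0 F' E'"
      unfolding topspace_aut by auto
    define F where "F = {x \<in> X. \<exists>u\<in>F'. \<exists>q n. \<psi> u q = Some (Inl x, n)}"
    define E where "E = {e \<in> D. \<exists>u\<in>F'. \<exists>q n. \<psi> u q = Some (Inr e, n)}"
    have fin: "finite {q. \<psi> u q \<noteq> None}" if "u \<in> F'" for u
      using psi_in[of u] fF(2) that unfolding Vset_def by auto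
    have "F \<subseteq> (\<Union>u\<in>F'. (\<lambda>q. projl (fst (the (\<psi> u q)))) ` {q. \<psi> u q \<noteq> None})"
    proof
      fix x assume "x \<in> F"
      then obtain u q n where u: "u \<in> F'" "\<psi> u q = Some (Inl x, n)" unfolding F_def by auto
      show "x \<in> (\<Union>u\<in>F'. (\<lambda>q. projl (fst (the (\<psi> u q)))) ` {q. \<psi> u q \<noteq> None})"
        by (rule UN_I[OF u(1)], rule image_eqI[of _ _ q]) (use u in auto)
    qed
    moreover have "finite (\<Union>u\<in>F'. (\<lambda>q. projl (fst (the (\<psi> u q)))) ` {q. \<psi> u q \<noteq> None})"
      using fF(1) fin by auto
    ultimately have finF: "finite F" by (rule finite_subset)
    have "E \<subseteq> (\<Union>u\<in>F'. (\<lambda>q. projr (fst (the (\<psi> u q)))) ` {q. \<psi> u q \<noteq> None})"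
    proof
      fix e assume "e \<in> E"
      then obtain u q n where u: "u \<in> F'" "\<psi> u q = Some (Inr e, n)" unfolding E_def by auto
      show "e \<in> (\<Union>u\<in>F'. (\<lambda>q. projr (fst (the (\<psi> u q)))) ` {q. \<psi> u q \<noteq> None})"
        by (rule UN_I[OF u(1)], rule image_eqI[of _ _ q]) (use u in auto)
    qed
    moreover have "finite (\<Union>u\<in>F'. (\<lambda>q. projr (fst (the (\<psi> u q)))) ` {q. \<psi> u q \<noteq> None})"
      using fF(1) fin by auto
    ultimately have finE: "finite E" by (rule finite_subset)
    have FX: "F \<subseteq> X" and ED: "E \<subseteq> D" unfolding F_def E_def by auto
    show "\<exists>T. openin (aut_top X D d) T \<and> h \<in> T \<and> T \<subseteq> {t \<in> topspace (aut_top X D d). Phi t \<in> basic_set U {q. 0 \<le> q} dU k0 F' E'}"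
    proof (intro exI conjI)
      show "openin (aut_top X D d) (basic_set X D d h F E)" by (rule basic_open[OF h finF FX finE ED])
      show "h \<in> basic_set X D d h F E" using h unfolding basic_set_def by simp
      show "basic_set X D d h F E \<subseteq> {t \<in> topspace (aut_top X D d). Phi t \<in> basic_set U {q. 0 \<le> q} dU k0 F' E'}"
      proof
        fix k assume kT: "k \<in> basic_set X D d h F E"
        then have k: "k \<in> dc_aut X D d" and kF: "\<And>x. x \<in> F \<Longrightarrow> fst k x = fst h x"
          and kE: "\<And>e. e \<in> E \<Longrightarrow> snd k e = snd h e" unfolding basic_set_def by auto
        have eqk: "fst (Phi k) u = fst (Phi h) u" if u: "u \<in> F'" for u
        proof -
          have uU: "u \<in> U" using u fF(2) by auto
          have "hat k (\<psi> u) = hat h (\<psi> u)"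
          proof (rule hat_agree[OF h k psi_in[OF uU]])
            fix x q n assume "x \<in> X" "\<psi> u q = Some (Inl x, n)"
            then have "x \<in> F" unfolding F_def using u by auto
            then show "fst k x = fst h x" by (rule kF)
          next
            fix e q n assume "e \<in> D" "\<psi> u q = Some (Inr e, n)"
            then have "e \<in> E" unfolding E_def using u by auto
            then show "snd k e = snd h e" by (rule kE)
          qed
          then show ?thesis using uU by (simp add: Phi_def)
        qed
        have "Phi k \<in> basic_set U {q. 0 \<le> q} dU k0 F' E'"
          unfolding basic_set_def
        proof (intro CollectI conjI ballI)
          show "Phi k \<in> dc_aut U {q. 0 \<le> q} dU" by (rule Phi_in[OF k])
          fix u assume "u \<in> F'"
          then show "fst (Phi k) u = fst k0 u" using eqk hB unfolding basic_set_def by auto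
        next
          fix e assume "e \<in> E'"
          then show "snd (Phi k) e = snd k0 e" using hB unfolding basic_set_def by (auto simp: Phi_def)
        qed
        then show "k \<in> {t \<in> topspace (aut_top X D d). Phi t \<in> basic_set U {q. 0 \<le> q} dU k0 F' E'}"
          using k topspace_aut by auto
      qed
    qed
  qed
qed

lemma top_Y: "topspace (subtopology (aut_top U {q. 0 \<le> q} dU) (Phi ` dc_aut X D d)) = Phi ` dc_aut X D d"
proof -
  have "Phi ` dc_aut X D d \<subseteq> dc_aut U {q. 0 \<le> q} dU" using Phi_in by blast
  then show ?thesis by (simp add: topspace_aut Int_absorb1)
qed

lemma cont_g: "continuous_map (subtopology (aut_top U {q. 0 \<le> q} dU) (Phi ` dc_aut X D d)) (aut_top X D d)
   (inv_into (dc_aut X D d) Phi)"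
proof (rule cont_into_aut)
  fix t assume "t \<in> topspace (subtopology (aut_top U {q. 0 \<le> q} dU) (Phi ` dc_aut X D d))"
  then have "t \<in> Phi ` dc_aut X D d" using top_Y by simp
  then show "inv_into (dc_aut X D d) Phi t \<in> dc_aut X D d" by (rule inv_into_into)
next
  fix h0 F E assume h0: "h0 \<in> dc_aut X D d" and fF: "finite F" "F \<subseteq> X" and fE: "finite E" "E \<subseteq> D"
  define F'' where "F'' = psi_i ` ex ` F \<union> psi_i ` ey ` E"
  have F''U: "F'' \<subseteq> U" unfolding F''_def using psii_in ex_in ey_in fF(2) fE(2) by auto
  have finF'': "finite F''" unfolding F''_def using fF(1) fE(1) by simp
  have Ph0: "Phi h0 \<in> dc_aut U {q. 0 \<le> q} dU" by (rule Phi_in[OF h0])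
  have key: "(h \<in> basic_set X D d h0 F E) = (Phi h \<in> basic_set U {q. 0 \<le> q} dU (Phi h0) F'' {})"
    if h: "h \<in> dc_aut X D d" for h
  proof -
    have "(\<forall>x\<in>F. fst h x = fst h0 x) = (\<forall>x\<in>F. fst (Phi h) (psi_i (ex x)) = fst (Phi h0) (psi_i (ex x)))"
      using Phi_ex_iff[OF h h0] fF(2) by auto
    moreover have "(\<forall>e\<in>E. snd h e = snd h0 e) = (\<forall>e\<in>E. fst (Phi h) (psi_i (ey e)) = fst (Phi h0) (psi_i (ey e)))"
      using Phi_ey_iff[OF h h0] fE(2) by auto
    moreover have "(\<forall>u\<in>F''. fst (Phi h) u = fst (Phi h0) u) =
       ((\<forall>x\<in>F. fst (Phi h) (psi_i (ex x)) = fst (Phi h0) (psi_i (ex x))) \<and>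
        (\<forall>e\<in>E. fst (Phi h) (psi_i (ey e)) = fst (Phi h0) (psi_i (ey e))))"
      unfolding F''_def by auto
    ultimately show ?thesis using h Phi_in[OF h] unfolding basic_set_def by auto
  qed
  have eq: "{t \<in> topspace (subtopology (aut_top U {q. 0 \<le> q} dU) (Phi ` dc_aut X D d)).
       inv_into (dc_aut X D d) Phi t \<in> basic_set X D d h0 F E}
     = Phi ` dc_aut X D d \<inter> basic_set U {q. 0 \<le> q} dU (Phi h0) F'' {}"
  proof (intro equalityI subsetI)
    fix t assume "t \<in> {t \<in> topspace (subtopology (aut_top U {q. 0 \<le> q} dU) (Phi ` dc_aut X D d)).
       inv_into (dc_aut X D d) Phi t \<in> basic_set X D d h0 F E}"
    then obtain h where h: "h \<in> dc_aut X D d" "t = Phi h" and hb: "inv_into (dc_aut X D d) Phi t \<in> basic_set X D d h0 F E"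
      using top_Y by auto
    have "inv_into (dc_aut X D d) Phi t = h" using h inv_into_f_f[OF Phi_inj] by simp
    then show "t \<in> Phi ` dc_aut X D d \<inter> basic_set U {q. 0 \<le> q} dU (Phi h0) F'' {}"
      using hb key[OF h(1)] h by auto
  next
    fix t assume t: "t \<in> Phi ` dc_aut X D d \<inter> basic_set U {q. 0 \<le> q} dU (Phi h0) F'' {}"
    then obtain h where h: "h \<in> dc_aut X D d" "t = Phi h" by auto
    have "inv_into (dc_aut X D d) Phi t = h" using h inv_into_f_f[OF Phi_inj] by simp
    then show "t \<in> {t \<in> topspace (subtopology (aut_top U {q. 0 \<le> q} dU) (Phi ` dc_aut X D d)).
       inv_into (dc_aut X D d) Phi t \<in> basic_set X D d h0 F E}"
      using t key[OF h(1)] h top_Y by auto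
  qed
  show "openin (subtopology (aut_top U {q. 0 \<le> q} dU) (Phi ` dc_aut X D d))
     {t \<in> topspace (subtopology (aut_top U {q. 0 \<le> q} dU) (Phi ` dc_aut X D d)).
       inv_into (dc_aut X D d) Phi t \<in> basic_set X D d h0 F E}"
    unfolding eq by (rule openin_subtopology_Int2[OF basic_open[OF Ph0 finF'' F''U]]) auto
qed

lemma main: "group_hom (aut_group X D d) (aut_group U {q. 0 \<le> q} dU) Phi \<and>
             embedding_map (aut_top X D d) (aut_top U {q. 0 \<le> q} dU) Phi"
proof
  have "Phi \<in> hom (aut_group X D d) (aut_group U {q. 0 \<le> q} dU)"
    unfolding hom_def aut_group_def using Phi_in Phi_mult by auto
  then show "group_hom (aut_group X D d) (aut_group U {q. 0 \<le> q} dU) Phi"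
    unfolding group_hom_def group_hom_axioms_def using group_aut[of X D d] group_aut[of U "{q. 0 \<le> q}" dU] by blast
next
  show "embedding_map (aut_top X D d) (aut_top U {q. 0 \<le> q} dU) Phi"
    unfolding embedding_map_def topspace_aut homeomorphic_map_maps homeomorphic_maps_def
  proof (intro exI conjI)
    show "continuous_map (aut_top X D d) (subtopology (aut_top U {q. 0 \<le> q} dU) (Phi ` dc_aut X D d)) Phi"
      by (rule continuous_map_into_subtopology[OF cont_Phi]) (auto simp: topspace_aut)
    show "continuous_map (subtopology (aut_top U {q. 0 \<le> q} dU) (Phi ` dc_aut X D d)) (aut_top X D d)
       (inv_into (dc_aut X D d) Phi)" by (rule cont_g)
    show "\<forall>x\<in>dc_aut X D d. inv_into (dc_aut X D d) Phi (Phi x) = x"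
    proof
      fix x assume "x \<in> dc_aut X D d"
      then show "inv_into (dc_aut X D d) Phi (Phi x) = x" by (rule inv_into_f_f[OF Phi_inj])
    qed
    show "\<forall>y\<in>topspace (subtopology (aut_top U {q. 0 \<le> q} dU) (Phi ` dc_aut X D d)).
        Phi (inv_into (dc_aut X D d) Phi y) = y"
    proof
      fix y assume "y \<in> topspace (subtopology (aut_top U {q. 0 \<le> q} dU) (Phi ` dc_aut X D d))"
      then have "y \<in> Phi ` dc_aut X D d" using top_Y by simp
      then show "Phi (inv_into (dc_aut X D d) Phi y) = y" by (rule f_inv_into_f)
    qed
  qed
qed

end

theorem corollary4p13:
  fixes X :: "'a set" and D :: "'d::linorder set" and z :: 'd and d :: "'a \<Rightarrow> 'a \<Rightarrow> 'd"
    and U :: "'u set" and dU :: "'u \<Rightarrow> 'u \<Rightarrow> rat"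
  assumes "countable_tsum_space X D z d"
    and "rat_urysohn_ultrametric U dU"
  shows "\<exists>\<phi>. group_hom (aut_group X D d) (aut_group U {q. 0 \<le> q} dU) \<phi> \<and>
             embedding_map (aut_top X D d) (aut_top U {q. 0 \<le> q} dU) \<phi>"
proof -
  have tsX: "tsum_space X D z d" and cX: "countable X" and cD: "countable D"
    using assms(1) unfolding countable_tsum_space_def by auto
  have zD: "z \<in> D" using tsX unfolding tsum_space_def by auto
  have tsU: "tsum_space U {q. 0 \<le> q} 0 dU" and cU: "countable U"
    using assms(2) unfolding rat_urysohn_ultrametric_def countable_tsum_space_def by auto
  have eU: "extp U dU"
    using assms(2) unfolding rat_urysohn_ultrametric_def extp_def by blast
  have umU: "um U dU"
    unfolding um_def
  proof (intro conjI ballI)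
    fix x y assume xy: "x \<in> U" "y \<in> U"
    then show "0 \<le> dU x y" "dU x y = dU y x" "(dU x y = 0) = (x = y)"
      using tsU unfolding tsum_space_def by auto
  next
    fix x y w assume "x \<in> U" "y \<in> U" "w \<in> U"
    then show "dU x w \<le> max (dU x y) (dU y w)"
      using tsU unfolding tsum_space_def by blast
  qed
  define W where "W = (X <+> D) \<times> (UNIV :: nat set)"
  have infW: "infinite W"
  proof
    assume "finite W"
    moreover have "X <+> D \<noteq> {}" using zD by auto
    ultimately have "finite (UNIV :: nat set)" unfolding W_def by (rule finite_cartesian_productD2)
    then show False by simp
  qed
  have cW: "countable W" unfolding W_def using cX cD by simp
  obtain \<psi> :: "'u \<Rightarrow> rat \<Rightarrow> (('a + 'd) \<times> nat) option"
    where psi: "bij_betw \<psi> U (Vset W)" "\<forall>x\<in>U. \<forall>y\<in>U. dV (\<psi> x) (\<psi> y) = dU x y"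
    using back_and_forth[OF umU um_V eU ext_V[OF infW] cU countable_V[OF cW]] by blast
  interpret e: emb X D d U dU \<psi>
    by unfold_locales (use psi in \<open>auto simp: W_def\<close>)
  show ?thesis using e.main by blast
qed


end
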